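(* Let $n,N\ge 1$ and $\varepsilon\ge 0$ be integers with $\varepsilon/n\le 1/2$ and $N<2^{n(1-h(\varepsilon/n))-1}$. Suppose the $N$ enrolled templates are distinct (drawn uniformly without replacement from $\mathbb{Z}_2^n$), so that the success probability of a single uniformly random guess is $$p=1-\prod_{\ell=0}^{N-1}\left(1-\frac{2^n}{2^n-\ell}V_\varepsilon\right),$$ and let $m_{out}=-\ln 2/\ln(1-p)$ be the median number of trials for the attacker to successfully impersonate a user. Then $$m_{out}=\Omega\left(2^{n(1-h(\varepsilon/n))-\log_2(N)-\log_2\left(1+6\frac{N-1}{2^{n+1}}\right)}\right)$$ and $$m_{out}=O\left(2^{n(1-h(\varepsilon/n))+\frac{1}{2}\log_2\left(\varepsilon\left(1-\frac{\varepsilon}{n}\right)\right)-\log_2 N-\log_2\left(1+\frac{N-1}{2^{n+1}}\right)}\right).$$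
   Context: Templates are binary vectors in $\mathbb{Z}_2^n$ compared with the Hamming distance $d_{\mathcal H}$; a guess $t$ is accepted against enrolled template $v$ if $d_{\mathcal H}(t,v)\le\varepsilon$. The attacker draws independent uniformly random templates until one is accepted against some enrolled template. $|B_\varepsilon|=\sum_{k=0}^{\varepsilon}\binom{n}{k}$ is the size of a Hamming ball of radius $\varepsilon$, $V_\varepsilon=|B_\varepsilon|/2^n$, and $h(x)=-x\log_2x-(1-x)\log_2(1-x)$ is the binary entropy function. *)

theory Defs
  imports Complex_Main
begin

definition bin_entropy :: "real \<Rightarrow> real" where
  "bin_entropy x = (if x = 0 \<or> x = 1 then 0
                    else - x * log 2 x - (1 - x) * log 2 (1 - x))"

text \<open>Relative volume of a Hamming ball of radius eps in Z_2^n.\<close>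
definition ball_vol :: "nat \<Rightarrow> nat \<Rightarrow> real" where
  "ball_vol n eps = real (\<Sum>k\<le>eps. n choose k) / 2 ^ n"

definition succ_prob :: "nat \<Rightarrow> nat \<Rightarrow> nat \<Rightarrow> real" where
  "succ_prob n N eps =
     1 - (\<Prod>l<N. 1 - (2 ^ n / (2 ^ n - real l)) * ball_vol n eps)"

definition m_out :: "nat \<Rightarrow> nat \<Rightarrow> nat \<Rightarrow> real" where
  "m_out n N eps = - ln 2 / ln (1 - succ_prob n N eps)"

end

theory Submission
  imports Defs
begin

lemma ln_lower2: assumes "0 \<le> x" shows "2*x/(2+x) \<le> ln (1+(x::real))"
proof -
  let ?f = "\<lambda>t::real. ln (1+t) - 2*t/(2+t)"
  have "?f 0 \<le> ?f x"
  proof (rule DERIV_nonneg_imp_nondecreasing[OF assms])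
    fix t :: real assume t: "0 \<le> t" "t \<le> x"
    have "DERIV ?f t :> (1/(1+t) - (2*(2+t) - 2*t)/(2+t)^2)"
      using t by (auto intro!: derivative_eq_intros simp: power2_eq_square)
    moreover have "1/(1+t) - (2*(2+t) - 2*t)/(2+t)^2 = t^2/((1+t)*(2+t)^2)"
      proof -
      have "1+t \<noteq> 0" "2+t \<noteq> 0" using t by auto
      then show ?thesis by (simp add: divide_simps power2_eq_square) (simp add: algebra_simps)
    qed
    moreover have "t^2/((1+t)*(2+t)^2) \<ge> 0" using t by simp
    ultimately show "\<exists>y. DERIV ?f t :> y \<and> y \<ge> 0" by metis
  qed
  then show ?thesis by simp
qed

lemma ln_upper3: assumes "0 \<le> x" shows "ln (1+(x::real)) \<le> x - x^2/2 + x^3/3"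
proof -
  let ?f = "\<lambda>t::real. t - t^2/2 + t^3/3 - ln (1+t)"
  have "?f 0 \<le> ?f x"
  proof (rule DERIV_nonneg_imp_nondecreasing[OF assms])
    fix t :: real assume t: "0 \<le> t" "t \<le> x"
    have "DERIV ?f t :> (1 - t + t^2 - 1/(1+t))"
      using t by (auto intro!: derivative_eq_intros simp: power2_eq_square)
    moreover have "1 - t + t^2 - 1/(1+t) = t^3/(1+t)"
      using t by (simp add: field_simps power2_eq_square power3_eq_cube)
    moreover have "t^3/(1+t) \<ge> 0" using t by simp
    ultimately show "\<exists>y. DERIV ?f t :> y \<and> y \<ge> 0" by metis
  qed
  then show ?thesis by simp
qed


definition Dst :: "nat \<Rightarrow> real" where
  "Dst m = ln (fact m) - (real m + 1/2) * ln (real m) + real m"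

lemma step_bounds:
  assumes "m \<ge> 1"
  shows "1 \<le> (real m + 1/2) * ln (1 + 1/real m)"
    and "(real m + 1/2) * ln (1 + 1/real m) \<le> 1 + 1/(2*real m) - 1/(2*(real m+1))"
proof -
  have m: "real m \<ge> 1" using assms by simp
  have "2*(1/real m)/(2+1/real m) \<le> ln (1 + 1/real m)" by (rule ln_lower2) simp
  moreover have "2*(1/real m)/(2+1/real m) = 1/(real m + 1/2)" using m by (simp add: field_simps)
  ultimately show "1 \<le> (real m + 1/2) * ln (1 + 1/real m)" using m
    by (simp add: divide_simps mult.commute)
  have "ln (1 + 1/real m) \<le> 1/real m - (1/real m)^2/2 + (1/real m)^3/3" by (rule ln_upper3) simp
  hence "(real m + 1/2) * ln (1 + 1/real m) \<le> (real m + 1/2) * (1/real m - (1/real m)^2/2 + (1/real m)^3/3)"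
    using m by (intro mult_left_mono) auto
  also have "\<dots> = 1 + 1/(12*real m^2) + 1/(6*real m^3)" using m
    by (simp add: field_simps power2_eq_square power3_eq_cube)
  also have "\<dots> \<le> 1 + 1/(2*real m) - 1/(2*(real m+1))"
  proof -
    have "1/(2*real m) - 1/(2*(real m+1)) = 1/(2*real m*(real m+1))" using m by (simp add: field_simps)
    moreover have "1/(12*real m^2) + 1/(6*real m^3) \<le> 1/(2*real m*(real m+1))"
    proof -
      have "1/(6*real m^3) \<le> 1/(6*real m^2)" using m
        by (intro divide_left_mono) (auto simp: power2_eq_square power3_eq_cube)
      moreover have "1/(12*real m^2) + 1/(6*real m^2) = 1/(4*real m^2)" by (simp add: field_simps)
      moreover have "1/(4*real m^2) \<le> 1/(2*real m*(real m+1))" using m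
        by (intro divide_left_mono) (auto simp: power2_eq_square)
      ultimately show ?thesis by linarith
    qed
    ultimately show ?thesis by linarith
  qed
  finally show "(real m + 1/2) * ln (1 + 1/real m) \<le> 1 + 1/(2*real m) - 1/(2*(real m+1))" .
qed

lemma Dst_Suc:
  assumes "m \<ge> 1"
  shows "Dst (Suc m) = Dst m - ((real m + 1/2) * ln (1 + 1/real m) - 1)"
proof -
  have m: "real m \<ge> 1" using assms by simp
  have h1: "ln (1 + 1/real m) = ln (real m + 1) - ln (real m)"
  proof -
    have "1 + 1/real m = (real m + 1)/real m" using m by (simp add: field_simps)
    then show ?thesis using m by (simp add: ln_divide_pos)
  qed
  have h2: "ln (fact (Suc m) :: real) = ln (real m + 1) + ln (fact m)"
    by (simp add: ln_mult add.commute)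
  show ?thesis unfolding Dst_def h1 h2 of_nat_Suc by (simp add: algebra_simps)
qed

lemma Dst_bounds:
  assumes "m \<ge> 1"
  shows "1/2 + 1/(2*real m) \<le> Dst m \<and> Dst m \<le> 1"
  using assms
proof (induction m rule: dec_induct)
  case base
  then show ?case by (simp add: Dst_def)
next
  case (step m)
  have s1: "1 \<le> (real m + 1/2) * ln (1 + 1/real m)"
   and s2: "(real m + 1/2) * ln (1 + 1/real m) \<le> 1 + 1/(2*real m) - 1/(2*(real m+1))"
    using step_bounds[OF step(1)] by auto
  have e: "1/(2*real (Suc m)) = 1/(2*(real m+1))" by simp
  show ?case using step(3) s1 s2 Dst_Suc[OF step(1)] unfolding e by linarith
qed

lemma ln_fact_bounds:
  assumes "m \<ge> 1"
  shows "(real m + 1/2) * ln (real m) - real m + 1/2 \<le> ln (fact m :: real)"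
    and "ln (fact m :: real) \<le> (real m + 1/2) * ln (real m) - real m + 1"
proof -
  have "0 \<le> 1/(2*real m)" by simp
  then show "(real m + 1/2) * ln (real m) - real m + 1/2 \<le> ln (fact m :: real)"
    using Dst_bounds[OF assms] unfolding Dst_def by linarith
  show "ln (fact m :: real) \<le> (real m + 1/2) * ln (real m) - real m + 1"
    using Dst_bounds[OF assms] unfolding Dst_def by linarith
qed


definition Gf :: "nat \<Rightarrow> nat \<Rightarrow> real" where
  "Gf n k = real n * ln (real n) - real k * ln (real k) - real (n-k) * ln (real (n-k))"

lemma entropy_G:
  assumes "1 \<le> k" "k < n"
  shows "2 powr (real n * bin_entropy (real k / real n)) = exp (Gf n k)"
proof -
  have n: "real n > 0" "real k > 0" "real k < real n" using assms by auto
  define l where "l = real k / real n"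
  have l: "0 < l" "l < 1" using n by (auto simp: l_def)
  have l1: "1 - l = real (n-k) / real n" using n assms by (simp add: l_def field_simps of_nat_diff)
  have nk: "real (n-k) > 0" using assms by simp
  have "bin_entropy l = (- l * ln l - (1-l) * ln (1-l)) / ln 2"
    using l by (simp add: bin_entropy_def log_def diff_divide_distrib)
  hence "bin_entropy l * ln 2 = - l * ln l - (1-l) * ln (1-l)"
    by simp
  hence "real n * bin_entropy l * ln 2 = real n * (- l * ln l - (1-l) * ln (1-l))"
    by (simp only: mult.assoc)
  also have "\<dots> = - real n * l * ln l - real n * (1-l) * ln (1-l)"
    by (simp add: algebra_simps)
  also have "\<dots> = - (real n * l) * ln l - (real n * (1-l)) * ln (1-l)" by (simp add: algebra_simps)
  also have "\<dots> = - real k * (ln (real k) - ln (real n)) - real (n-k) * (ln (real (n-k)) - ln (real n))"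
  proof -
    have e1: "real n * l = real k" using n by (simp add: l_def)
    have e2: "real n * (1-l) = real (n-k)" unfolding l1 using n by simp
    have e3: "ln l = ln (real k) - ln (real n)" using n by (simp add: l_def ln_divide_pos)
    have e4: "ln (1-l) = ln (real (n-k)) - ln (real n)" unfolding l1 using n nk by (simp add: ln_divide_pos)
    show ?thesis unfolding e1 e2 e3 e4 ..
  qed
  also have "\<dots> = Gf n k"
  proof -
    have "real (n-k) = real n - real k" using assms by (simp add: of_nat_diff)
    then show ?thesis unfolding Gf_def by (simp add: algebra_simps)
  qed
  finally show ?thesis by (simp add: powr_def l_def mult.commute)
qed

lemma binom_lower:
  assumes "1 \<le> k" "k < n"
  shows "real (n choose k) \<ge> exp (Gf n k - 3/2) / sqrt (real k * (1 - real k / real n))"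
proof -
  have nk: "n - k \<ge> 1" using assms by simp
  have kn: "k \<le> n" using assms by simp
  have n: "n \<ge> 1" using assms by simp
  have pos: "real n > 0" "real k > 0" "real (n-k) > 0" using assms by auto
  have "ln (real (n choose k)) = ln (fact n) - ln (fact k) - ln (fact (n-k))"
    unfolding binomial_fact[OF kn] by (simp add: ln_div ln_mult)
  also have "\<dots> \<ge> Gf n k - 3/2 - (ln (real k) + ln (real (n-k)) - ln (real n))/2"
    using ln_fact_bounds(1)[OF n] ln_fact_bounds(2)[OF assms(1)] ln_fact_bounds(2)[OF nk]
      of_nat_diff[OF kn, where 'a=real]
    unfolding Gf_def distrib_right by argo
  finally have L: "ln (real (n choose k)) \<ge> Gf n k - 3/2 - (ln (real k) + ln (real (n-k)) - ln (real n))/2" .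
  have s: "real k * (1 - real k / real n) = real k * real (n-k) / real n"
    using pos kn by (simp add: field_simps of_nat_diff)
  have sp: "real k * real (n-k) / real n > 0" using pos by simp
  have lnS: "ln (sqrt (real k * (1 - real k / real n))) = (ln (real k) + ln (real (n-k)) - ln (real n))/2"
    unfolding s using pos sp by (simp add: ln_sqrt ln_divide_pos ln_mult)
  have cpos: "real (n choose k) > 0" using kn by simp
  have sqp: "sqrt (real k * (1 - real k / real n)) > 0" unfolding s using sp by (rule real_sqrt_gt_zero)
  have "ln (exp (Gf n k - 3/2) / sqrt (real k * (1 - real k / real n))) \<le> ln (real (n choose k))"
    using L sqp by (simp add: ln_divide_pos lnS)
  then show ?thesis using cpos sqp by simp
qed

lemma ball_sum_upper:
  assumes "1 \<le> k" "2 * k \<le> n"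
  shows "real (\<Sum>j\<le>k. n choose j) \<le> exp (Gf n k)"
proof -
  have kn: "k < n" using assms by simp
  have pos: "real n > 0" "real k > 0" "real (n-k) > 0" using assms by auto
  define l where "l = real k / real n"
  have l: "0 < l" "l \<le> 1/2" using pos assms by (auto simp: l_def field_simps)
  have l1: "1 - l = real (n-k) / real n" using pos kn by (simp add: l_def field_simps of_nat_diff)
  have P: "l ^ k * (1-l) ^ (n-k) = exp (- Gf n k)"
  proof -
    have "ln (l ^ k * (1-l) ^ (n-k)) = real k * ln l + real (n-k) * ln (1-l)"
      using l by (simp add: ln_mult ln_realpow)
    also have "\<dots> = - Gf n k" unfolding l1 Gf_def using pos kn
      by (simp add: l_def ln_divide_pos algebra_simps of_nat_diff)
    finally have "ln (l ^ k * (1-l) ^ (n-k)) = - Gf n k" .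
    moreover have "l ^ k * (1-l) ^ (n-k) > 0" using l by simp
    ultimately show ?thesis by (metis exp_ln)
  qed
  have term_le: "l ^ k * (1-l) ^ (n-k) \<le> l ^ j * (1-l) ^ (n-j)" if "j \<le> k" for j
  proof -
    have "l ^ k * (1-l) ^ (n-k) = l^j * (l ^ (k-j) * (1-l)^(n-k))"
      using that by (simp add: power_add[symmetric])
    also have "\<dots> \<le> l^j * ((1-l) ^ (k-j) * (1-l)^(n-k))"
      using l by (intro mult_left_mono mult_right_mono power_mono) auto
    also have "\<dots> = l ^ j * (1-l) ^ (n-j)" using that kn
      by (simp add: power_add[symmetric])
    finally show ?thesis .
  qed
  have "real (\<Sum>j\<le>k. n choose j) * (l ^ k * (1-l) ^ (n-k)) = (\<Sum>j\<le>k. real (n choose j) * (l ^ k * (1-l) ^ (n-k)))"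
    by (simp add: sum_distrib_right)
  also have "\<dots> \<le> (\<Sum>j\<le>k. real (n choose j) * l ^ j * (1-l) ^ (n-j))"
    by (intro sum_mono) (simp add: term_le mult.assoc mult_left_mono)
  also have "\<dots> \<le> (\<Sum>j\<le>n. real (n choose j) * l ^ j * (1-l) ^ (n-j))"
    using l kn by (intro sum_mono2) auto
  also have "\<dots> = (l + (1-l)) ^ n" by (rule binomial_ring[symmetric])
  also have "\<dots> = 1" by simp
  finally have "real (\<Sum>j\<le>k. n choose j) * exp (- Gf n k) \<le> 1" unfolding P .
  then show ?thesis by (simp add: exp_minus field_simps)
qed


lemma T_eq:
  assumes "1 \<le> k" "2 * k \<le> n"
  shows "2 powr (real n * (1 - bin_entropy (real k / real n))) = 2 ^ n / exp (Gf n k)"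
proof -
  have "real n * (1 - bin_entropy (real k / real n)) = real n - real n * bin_entropy (real k / real n)"
    by (simp add: algebra_simps)
  then show ?thesis using entropy_G[of k n] assms by (simp add: powr_diff powr_realpow)
qed

lemma sum_ge1: "real (\<Sum>j\<le>k. n choose j) \<ge> 1"
proof -
  have "(\<Sum>j\<le>k. n choose j) \<ge> (n choose 0)"
    by (rule member_le_sum) auto
  then have "1 \<le> (\<Sum>j\<le>k. n choose j)" by simp
  then show ?thesis by (metis of_nat_1 of_nat_le_iff)
qed

lemma ball_vol_ge: "ball_vol n k \<ge> 1 / 2 ^ n"
  unfolding ball_vol_def by (rule divide_right_mono[OF sum_ge1]) simp

lemma ball_up:
  assumes "1 \<le> n" "2 * k \<le> n"
  shows "ball_vol n k \<le> 1 / 2 powr (real n * (1 - bin_entropy (real k / real n)))"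
proof (cases "k = 0")
  case True
  then show ?thesis by (simp add: ball_vol_def bin_entropy_def powr_realpow)
next
  case False
  hence k: "1 \<le> k" by simp
  have "ball_vol n k = real (\<Sum>j\<le>k. n choose j) / 2 ^ n" by (simp add: ball_vol_def)
  also have "\<dots> \<le> exp (Gf n k) / 2 ^ n"
    by (rule divide_right_mono[OF ball_sum_upper[OF k assms(2)]]) simp
  also have "\<dots> = 1 / 2 powr (real n * (1 - bin_entropy (real k / real n)))"
    unfolding T_eq[OF k assms(2)] by simp
  finally show ?thesis .
qed

lemma ball_lo:
  assumes "1 \<le> k" "2 * k \<le> n"
  shows "ball_vol n k \<ge> exp (-3/2) / (sqrt (real k * (1 - real k / real n)) *
            2 powr (real n * (1 - bin_entropy (real k / real n))))"
proof -
  have kn: "k < n" using assms by simp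
  have "real (n choose k) \<le> real (\<Sum>j\<le>k. n choose j)"
    by (subst of_nat_le_iff, rule member_le_sum) auto
  hence "exp (Gf n k - 3/2) / sqrt (real k * (1 - real k / real n)) \<le> real (\<Sum>j\<le>k. n choose j)"
    using binom_lower[OF assms(1) kn] by linarith
  hence "exp (Gf n k - 3/2) / sqrt (real k * (1 - real k / real n)) / 2 ^ n \<le> ball_vol n k"
    unfolding ball_vol_def by (rule divide_right_mono) simp_all
  moreover have "exp (Gf n k - 3/2) / sqrt (real k * (1 - real k / real n)) / 2 ^ n =
     exp (-3/2) / (sqrt (real k * (1 - real k / real n)) * (2 ^ n / exp (Gf n k)))"
  proof -
    have "exp (Gf n k - 3/2) = exp (Gf n k) * exp (-3/2)" by (simp add: exp_add[symmetric])
    then show ?thesis by simp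
  qed
  ultimately show ?thesis unfolding T_eq[OF assms] by linarith
qed


lemma main_bounds:
  fixes n N eps :: nat
  assumes n: "n \<ge> 1" and N: "N \<ge> 1" and r: "real eps / real n \<le> 1/2"
   and NT: "real N < 2 powr (real n * (1 - bin_entropy (real eps / real n)) - 1)"
  shows "m_out n N eps \<ge> ln 2 / 6 * 2 powr (real n * (1 - bin_entropy (real eps / real n))
            - log 2 (real N) - log 2 (1 + 6 * (real N - 1) / 2 ^ (n + 1)))"
    and "eps \<ge> 1 \<Longrightarrow>
        m_out n N eps \<le> 2 * ln 2 * exp (3/2) * 2 powr (real n * (1 - bin_entropy (real eps / real n))
            + 1 / 2 * log 2 (real eps * (1 - real eps / real n))
            - log 2 (real N) - log 2 (1 + (real N - 1) / 2 ^ (n + 1)))"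
proof -
  define H where "H = real n * (1 - bin_entropy (real eps / real n))"
  define T where "T = 2 powr H"
  define V where "V = ball_vol n eps"
  define a :: real where "a = 2 ^ n"
  have e2: "2 * eps \<le> n"
  proof -
    have "real eps \<le> real n / 2" using r n by (simp add: divide_simps)
    then show ?thesis by linarith
  qed
  have Tpos: "T > 0" unfolding T_def by simp
  have VT: "V \<le> 1 / T" unfolding V_def T_def H_def using ball_up[OF n e2] .
  have T2: "2 powr (H - 1) = T / 2" unfolding T_def by (simp add: powr_diff)
  have NT2: "real N < T / 2" using NT T2 unfolding H_def by simp
  have Tgt2: "T > 2" using NT2 N by simp
  have Va: "V \<ge> 1 / a" unfolding V_def a_def by (rule ball_vol_ge)
  have apos: "a > 0" unfolding a_def by simp
  have Vpos: "V > 0" using Va apos by (meson less_le_trans zero_less_divide_1_iff)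
  have Ta: "T \<le> a"
  proof -
    have "1 / a \<le> 1 / T" using Va VT by linarith
    then show ?thesis using apos Tpos by (simp add: divide_simps)
  qed
  have a4: "a \<ge> 4"
  proof -
    have "n \<noteq> 1" proof
      assume "n = 1" then have "a = 2" unfolding a_def by simp
      then show False using Ta Tgt2 by simp
    qed
    then have "n \<ge> 2" using n by simp
    then have "(2::real) ^ 2 \<le> 2 ^ n" by (intro power_increasing) auto
    then show ?thesis unfolding a_def by simp
  qed
  have key: "3 * a \<le> 2 * (a - T/2) * T"
  proof -
    have p1: "(T-2)*(a-T) \<ge> 0" using Tgt2 Ta by simp
    have p2: "(T-2)*(a-2) \<ge> 0" using Tgt2 a4 by simp
    have "2 * (a - T/2) * T - 3 * a = (T-2)*(a-T) + (T-2)*(a-2) + (a-4)" by (simp add: algebra_simps)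
    then show ?thesis using p1 p2 a4 by linarith
  qed
  define x where "x l = a / (a - real l) * V" for l :: nat
  have xb: "V \<le> x l \<and> x l \<le> 2 * V \<and> x l \<le> 2/3" if l: "l < N" for l
  proof -
    have lT: "real l < T / 2" using l NT2 by linarith
    have d: "a - real l > a / 2" using lT Ta by linarith
    have dpos: "a - real l > 0" using d apos by linarith
    have r1: "a / (a - real l) \<ge> 1" using dpos by simp
    have r2: "a / (a - real l) \<le> 2" using d dpos by (simp add: divide_simps)
    have "V \<le> x l" unfolding x_def using mult_right_mono[OF r1, of V] Vpos by simp
    moreover have "x l \<le> 2 * V" unfolding x_def using mult_right_mono[OF r2, of V] Vpos by simp
    moreover have "x l \<le> 2/3"
    proof -
      have "x l \<le> a / (a - real l) * (1 / T)" unfolding x_def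
        using VT dpos apos by (intro mult_left_mono) auto
      also have "\<dots> = a / ((a - real l) * T)" by simp
      also have "\<dots> \<le> 2/3"
      proof -
        have "2 * (a - T/2) * T \<le> 2 * (a - real l) * T" using lT Tpos by simp
        moreover have "2 * (a - real l) * T = 2 * ((a - real l) * T)" by simp
        ultimately have "3 * a \<le> 2 * ((a - real l) * T)" using key by linarith
        then show ?thesis using dpos Tpos by (simp add: divide_simps)
      qed
      finally show ?thesis .
    qed
    ultimately show ?thesis by blast
  qed
  have xpos: "x l > 0" if "l < N" for l using xb[OF that] Vpos by linarith
  have lnb: "- 3 * x l \<le> ln (1 - x l) \<and> ln (1 - x l) \<le> - x l" if "l < N" for l
  proof -
    have x1: "x l \<le> 2/3" "x l > 0" using xb[OF that] xpos[OF that] by auto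
    have up: "ln (1 - x l) \<le> - x l" using ln_le_minus_one[of "1 - x l"] x1 by simp
    have "ln (1 / (1 - x l)) \<le> 1 / (1 - x l) - 1" using x1 by (intro ln_le_minus_one) simp
    moreover have "ln (1 / (1 - x l)) = - ln (1 - x l)" using x1 by (simp add: ln_div)
    moreover have "1 / (1 - x l) - 1 \<le> 3 * x l"
      using x1 by (simp add: divide_simps) 
    ultimately show ?thesis using up by linarith
  qed
  define S where "S = (\<Sum>l<N. ln (1 - x l))"
  have prod_eq: "1 - succ_prob n N eps = (\<Prod>l<N. 1 - x l)"
    unfolding succ_prob_def x_def V_def a_def by simp
  have lnprod: "ln (1 - succ_prob n N eps) = S"
    unfolding prod_eq S_def
  proof (intro ln_prod)
    fix i assume "i \<in> {..<N}"
    then have "x i \<le> 2/3" using xb by simp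
    then show "1 - x i \<noteq> 0" by simp
  qed simp
  have mo: "m_out n N eps = ln 2 / (- S)"
    unfolding m_out_def lnprod by simp
  have Sup: "S \<le> - (real N * V)"
  proof -
    have "S \<le> (\<Sum>l<N. - V)" unfolding S_def using lnb xb
      by (intro sum_mono) (smt (verit) lessThan_iff)
    then show ?thesis by simp
  qed
  have Slo: "S \<ge> - 6 * real N / T"
  proof -
    have "(\<Sum>l<N. - 6 * V) \<le> S" unfolding S_def using lnb xb
      by (intro sum_mono) (smt (verit) lessThan_iff)
    then have "- 6 * real N * V \<le> S" by simp
    moreover have "- 6 * real N / T \<le> - 6 * real N * V"
    proof -
      have "real N * V \<le> real N * (1 / T)" using VT by (intro mult_left_mono) auto
      then show ?thesis by simp
    qed
    ultimately show ?thesis by linarith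
  qed
  have mSpos: "- S > 0" using Sup Vpos N by (smt (verit) mult_pos_pos of_nat_0_less_iff less_le_trans zero_less_one le_numeral_extra(1))
  have Npos: "real N > 0" using N by simp
  have mlo: "m_out n N eps \<ge> ln 2 * T / (6 * real N)"
  proof -
    have "- S \<le> 6 * real N / T" using Slo by simp
    moreover have "0 < 6 * real N / T * (- S)" using mSpos Npos Tpos by (intro mult_pos_pos) auto
    ultimately have "ln 2 / (6 * real N / T) \<le> ln 2 / (- S)"
      by (intro divide_left_mono) auto
    then show ?thesis unfolding mo using Tpos by simp
  qed
  define Q where "Q = 1 + 6 * (real N - 1) / 2 ^ (n + 1)"
  have Q1: "Q \<ge> 1" unfolding Q_def using N by simp
  have pw: "2 powr (H - log 2 (real N) - log 2 Q) = T / real N / Q"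
    unfolding T_def using Npos Q1 by (simp add: powr_diff)
  have "ln 2 / 6 * (T / real N / Q) \<le> ln 2 / 6 * (T / real N)"
    using Q1 Tpos Npos by (intro mult_left_mono) (auto simp: divide_simps)
  also have "\<dots> \<le> m_out n N eps" using mlo by simp
  finally show "m_out n N eps \<ge> ln 2 / 6 * 2 powr (real n * (1 - bin_entropy (real eps / real n))
            - log 2 (real N) - log 2 (1 + 6 * (real N - 1) / 2 ^ (n + 1)))"
    using pw unfolding H_def Q_def by simp
  assume e1: "eps \<ge> 1"
  define s where "s = real eps * (1 - real eps / real n)"
  have spos: "s > 0" unfolding s_def using e1 e2 n by (simp add: divide_simps)
  have Vlo: "V \<ge> exp (-3/2) / (sqrt s * T)"
    unfolding V_def s_def T_def H_def using ball_lo[OF e1 e2] .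
  have sq: "sqrt s > 0" using spos by simp
  have mup: "m_out n N eps \<le> ln 2 * exp (3/2) * sqrt s * T / real N"
  proof -
    have "real N * (exp (-3/2) / (sqrt s * T)) \<le> real N * V" using Vlo Npos by (intro mult_left_mono) auto
    also have "\<dots> \<le> - S" using Sup by simp
    finally have "real N * (exp (-3/2) / (sqrt s * T)) \<le> - S" .
    moreover have "real N * (exp (-3/2) / (sqrt s * T)) > 0" using Npos sq Tpos by simp
    moreover have "0 < (- S) * (real N * (exp (-3/2) / (sqrt s * T)))"
      using mSpos Npos sq Tpos by (intro mult_pos_pos) auto
    ultimately have "ln 2 / (- S) \<le> ln 2 / (real N * (exp (-3/2) / (sqrt s * T)))"
      by (intro divide_left_mono) auto
    also have "\<dots> = ln 2 * exp (3/2) * sqrt s * T / real N"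
      by (simp add: exp_minus field_simps)
    finally show ?thesis unfolding mo .
  qed
  define Q' where "Q' = 1 + (real N - 1) / 2 ^ (n + 1)"
  have Q'1: "Q' \<ge> 1" unfolding Q'_def using N by simp
  have Q'2: "Q' \<le> 2"
  proof -
    have "real N \<le> a" using NT2 Ta by linarith
    moreover have "a \<le> 2 ^ (n+1)" unfolding a_def by simp
    ultimately have "real N - 1 \<le> 2 ^ (n+1)" by linarith
    then show ?thesis unfolding Q'_def by (simp add: divide_simps)
  qed
  have sqrt_eq: "2 powr (1 / 2 * log 2 s) = sqrt s"
  proof -
    have "2 powr (1 / 2 * log 2 s) = (2 powr (log 2 s)) powr (1/2)"
      by (simp add: powr_powr mult.commute)
    also have "\<dots> = sqrt s" using spos by (simp add: powr_half_sqrt)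
    finally show ?thesis .
  qed
  have sqrt_eq2: "2 powr (log 2 s / 2) = sqrt s" using sqrt_eq by simp
  have pw2: "2 powr (H + 1 / 2 * log 2 s - log 2 (real N) - log 2 Q') = T * sqrt s / real N / Q'"
    unfolding T_def using Npos Q'1 by (simp add: powr_diff powr_add sqrt_eq sqrt_eq2)
  have "ln 2 * exp (3/2) * sqrt s * T / real N = 2 * ln 2 * exp (3/2) * (T * sqrt s / real N / 2)"
    by simp
  also have "\<dots> \<le> 2 * ln 2 * exp (3/2) * (T * sqrt s / real N / Q')"
    using Q'1 Q'2 Tpos sq Npos by (intro mult_left_mono divide_left_mono) auto
  finally show "m_out n N eps \<le> 2 * ln 2 * exp (3/2) * 2 powr (real n * (1 - bin_entropy (real eps / real n))
            + 1 / 2 * log 2 (real eps * (1 - real eps / real n))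
            - log 2 (real N) - log 2 (1 + (real N - 1) / 2 ^ (n + 1)))"
    using mup pw2 unfolding H_def Q'_def s_def by simp
qed

theorem corollary4p2:
  "\<exists>c C. c > 0 \<and> C > 0 \<and>
     (\<forall>n N eps :: nat. n \<ge> 1 \<and> N \<ge> 1 \<and> real eps / real n \<le> 1 / 2 \<and>
        real N < 2 powr (real n * (1 - bin_entropy (real eps / real n)) - 1) \<longrightarrow>
        m_out n N eps \<ge> c * 2 powr (real n * (1 - bin_entropy (real eps / real n))
            - log 2 (real N) - log 2 (1 + 6 * (real N - 1) / 2 ^ (n + 1)))
        \<and> (eps \<ge> 1 \<longrightarrow>
        m_out n N eps \<le> C * 2 powr (real n * (1 - bin_entropy (real eps / real n))
            + 1 / 2 * log 2 (real eps * (1 - real eps / real n))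
            - log 2 (real N) - log 2 (1 + (real N - 1) / 2 ^ (n + 1)))))"
  apply (rule exI[of _ "ln 2 / 6"], rule exI[of _ "2 * ln 2 * exp (3/2)"], intro conjI allI impI)
  subgoal by simp
  subgoal by simp
  subgoal for n N eps by (rule main_bounds(1)) auto
  subgoal for n N eps by (rule main_bounds(2)) auto
  done

end
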